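(* Let $T>0$, let $H(t,p)\in C^1([0,T]\times\mathbb{R}^n)$, and let $\sigma$ be convex and Lipschitz on $\mathbb{R}^n$. Let $t_+\in(0,T)$ be such that $H$ satisfies condition (A2) on $[0,t_+]\times\mathbb{R}^n$ and on $[t_+,T]\times\mathbb{R}^n$. Then the function $$u(t,x)=\begin{cases}\Big(\sigma^*+\int_0^tH(\tau,\cdot)\,d\tau\Big)^*(x), & (t,x)\in[0,t_+]\times\mathbb{R}^n,\\[1ex] \Big(\omega^*+\int_{t_+}^tH(\tau,\cdot)\,d\tau\Big)^*(x), & (t,x)\in[t_+,T]\times\mathbb{R}^n,\end{cases}$$ where $\omega(x)=u(t_+,x)=\big(\sigma^*+\int_0^{t_+}H(\tau,\cdot)d\tau\big)^*(x)$, is semiconvex (with linear modulus) on $\Omega=(0,T)\times\mathbb{R}^n$.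
   Context: For $f:\mathbb{R}^n\to\mathbb{R}\cup\{+\infty\}$, $f^*(y)=\sup_{q\in\mathbb{R}^n}\{\langle y,q\rangle-f(q)\}$ is the Fenchel conjugate. Condition (A2) on $[a,b]\times\mathbb{R}^n$: either (a) $H(t,\cdot)$ is convex for all $t\in[a,b]$, or concave for all $t\in[a,b]$; or (b) $H(t,p)=g(t)h(p)+k(t)$ for some functions $g,h,k$ with $g$ not changing sign on $[a,b]$. A function $v:\Omega\to\mathbb{R}$ is semiconvex with linear modulus if there is a constant $C>0$ such that $v(\lambda y_1+(1-\lambda)y_2)-\lambda v(y_1)-(1-\lambda)v(y_2)\le\lambda(1-\lambda)\frac C2|y_1-y_2|^2$ for all $y_1=(t_1,x_1),y_2=(t_2,x_2)\in\Omega$ and all $\lambda\in[0,1]$. *)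

theory Defs
  imports "HOL-Analysis.Analysis"
begin

definition fenchel :: "('a::euclidean_space \<Rightarrow> ereal) \<Rightarrow> 'a \<Rightarrow> ereal" where
  "fenchel f y = (SUP q. ereal (y \<bullet> q) - f q)"

definition C1_on :: "('a::real_normed_vector) set \<Rightarrow> ('a \<Rightarrow> real) \<Rightarrow> bool" where
  "C1_on S f \<longleftrightarrow> (\<exists>f'. (\<forall>z\<in>S. (f has_derivative blinfun_apply (f' z)) (at z within S))
                     \<and> continuous_on S f')"

definition cond_A2 :: "(real \<times> 'a::euclidean_space \<Rightarrow> real) \<Rightarrow> real \<Rightarrow> real \<Rightarrow> bool" where
  "cond_A2 H a b \<longleftrightarrow>
     (\<forall>t\<in>{a..b}. convex_on UNIV (\<lambda>p. H (t, p))) \<or>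
     (\<forall>t\<in>{a..b}. concave_on UNIV (\<lambda>p. H (t, p))) \<or>
     (\<exists>g h k. (\<forall>t\<in>{a..b}. \<forall>p. H (t, p) = g t * h p + k t) \<and>
              ((\<forall>t\<in>{a..b}. g t \<ge> 0) \<or> (\<forall>t\<in>{a..b}. g t \<le> 0)))"

definition semiconvex_lin :: "('a::real_normed_vector) set \<Rightarrow> ('a \<Rightarrow> real) \<Rightarrow> bool" where
  "semiconvex_lin \<Omega> v \<longleftrightarrow> (\<exists>C>0. \<forall>y1\<in>\<Omega>. \<forall>y2\<in>\<Omega>. \<forall>l\<in>{0..1}.
      v (l *\<^sub>R y1 + (1 - l) *\<^sub>R y2) - l * v y1 - (1 - l) * v y2
        \<le> l * (1 - l) * (C / 2) * (norm (y1 - y2))\<^sup>2)"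

end

theory Submission
  imports Defs
begin



lemma fenchel_ge: "ereal (y \<bullet> q) - f q \<le> fenchel f y"
  unfolding fenchel_def by (rule SUP_upper) simp

lemma fenchel_mono: assumes "\<And>y. f y \<le> g y" shows "fenchel g x \<le> fenchel f x"
  unfolding fenchel_def
proof (rule SUP_least)
  fix q
  have "ereal (x \<bullet> q) - g q \<le> ereal (x \<bullet> q) - f q" by (rule ereal_minus_mono[OF order_refl assms])
  also have "\<dots> \<le> (SUP q. ereal (x \<bullet> q) - f q)" by (rule SUP_upper) simp
  finally show "ereal (x \<bullet> q) - g q \<le> (SUP q. ereal (x \<bullet> q) - f q)" .
qed

lemma ereal_aux: "ereal a - b \<le> c \<Longrightarrow> ereal a - c \<le> (b::ereal)"
  by (cases b; cases c) auto

lemma fenchel2_le: "fenchel (fenchel f) y \<le> f y"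
  unfolding fenchel_def[of "fenchel f"]
proof (rule SUP_least)
  fix z
  have "ereal (z \<bullet> y) - f y \<le> fenchel f z" by (rule fenchel_ge)
  then have "ereal (y \<bullet> z) - f y \<le> fenchel f z" by (simp add: inner_commute)
  then show "ereal (y \<bullet> z) - fenchel f z \<le> f y"
    by (rule ereal_aux)
qed

lemma fenchel3: "fenchel (fenchel (fenchel f)) x = fenchel f x"
proof (rule antisym)
  show "fenchel (fenchel (fenchel f)) x \<le> fenchel f x" by (rule fenchel2_le)
  show "fenchel f x \<le> fenchel (fenchel (fenchel f)) x"
    by (rule fenchel_mono) (rule fenchel2_le)
qed

lemma conj_infty:
  fixes f :: "'a::euclidean_space \<Rightarrow> real"
  assumes fb: "\<And>q. f q \<le> A + L * norm q" and L: "0 \<le> L" and y: "norm y > L"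
  shows "fenchel (\<lambda>q. ereal (f q)) y = \<infinity>"
  unfolding fenchel_def
proof (rule SUP_PInfty)
  fix n :: nat
  have ny: "norm y > 0" using L y by linarith
  define s where "s = (real n + \<bar>A\<bar>) / (norm y - L)"
  have s0: "s \<ge> 0" unfolding s_def using y by auto
  define q where "q = (s / norm y) *\<^sub>R y"
  have iq: "y \<bullet> q = s * norm y"
  proof -
    have "y \<bullet> q = (s / norm y) * (y \<bullet> y)" by (simp add: q_def)
    also have "y \<bullet> y = norm y * norm y" by (simp add: power2_norm_eq_inner[symmetric] power2_eq_square)
    finally show ?thesis using ny by simp
  qed
  have nq: "norm q = s" using ny s0 by (simp add: q_def)
  have "s * (norm y - L) = real n + \<bar>A\<bar>" unfolding s_def using y by auto
  moreover have "f q \<le> A + L * s" using fb[of q] nq by simp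
  moreover have "s * norm y - (A + L * s) = s * (norm y - L) - A" by (simp add: algebra_simps)
  ultimately have "real n \<le> y \<bullet> q - f q" using iq by linarith
  then show "\<exists>i\<in>UNIV. ereal (real n) \<le> ereal (y \<bullet> i) - ereal (f i)"
    by (intro bexI[of _ q]) auto
qed

lemma conj_lb: "ereal (- f 0) \<le> fenchel (\<lambda>q. ereal (f q)) y"
  using fenchel_ge[of y 0 "\<lambda>q. ereal (f q)"] by simp

lemma conj_y0:
  fixes f :: "'a::euclidean_space \<Rightarrow> real"
  assumes "\<And>q. y0 \<bullet> q - B \<le> f q"
  shows "fenchel (\<lambda>q. ereal (f q)) y0 \<le> ereal B"
  unfolding fenchel_def
proof (rule SUP_least)
  fix q show "ereal (y0 \<bullet> q) - ereal (f q) \<le> ereal B" using assms[of q] by simp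
qed




lemma sup_rep:
  fixes g :: "'a::euclidean_space \<Rightarrow> ereal" and K :: "'a \<Rightarrow> real"
  assumes inf: "\<And>y. norm y > L \<Longrightarrow> g y = \<infinity>"
    and lb: "\<And>y. ereal (-M) \<le> g y"
    and y0: "g y0 \<noteq> \<infinity>"
    and Kb: "\<And>y. norm y \<le> L \<Longrightarrow> \<bar>K y\<bar> \<le> N"
  shows "fenchel (\<lambda>y. g y + ereal (K y)) x
           = ereal (Sup ((\<lambda>y. x \<bullet> y - real_of_ereal (g y) - K y) ` {y. norm y \<le> L \<and> g y \<noteq> \<infinity>}))"
    and "bdd_above ((\<lambda>y. x \<bullet> y - real_of_ereal (g y) - K y) ` {y. norm y \<le> L \<and> g y \<noteq> \<infinity>})"
    and "{y. norm y \<le> L \<and> g y \<noteq> \<infinity>} \<noteq> {}"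
    and "Sup ((\<lambda>y. x \<bullet> y - real_of_ereal (g y) - K y) ` {y. norm y \<le> L \<and> g y \<noteq> \<infinity>}) \<le> norm x * L + M + N"
proof -
  define Y where "Y = {y. norm y \<le> L \<and> g y \<noteq> \<infinity>}"
  define \<phi> where "\<phi> = (\<lambda>y. x \<bullet> y - real_of_ereal (g y) - K y)"
  have "norm y0 \<le> L"
  proof (rule ccontr)
    assume "\<not> norm y0 \<le> L"
    then have "g y0 = \<infinity>" using inf by simp
    with y0 show False by simp
  qed
  then have y0Y: "y0 \<in> Y" using y0 unfolding Y_def by simp
  then have ne: "Y \<noteq> {}" by auto
  have fin: "g y = ereal (real_of_ereal (g y))" if "y \<in> Y" for y
    using that lb[of y] unfolding Y_def by (cases "g y") auto
  have gr: "-M \<le> real_of_ereal (g y)" if "y \<in> Y" for y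
  proof -
    have "ereal (-M) \<le> ereal (real_of_ereal (g y))" using lb[of y] fin[OF that] by simp
    then show ?thesis by simp
  qed
  have bd: "\<phi> y \<le> norm x * L + M + N" if "y \<in> Y" for y
  proof -
    have nyL: "norm y \<le> L" using that unfolding Y_def by simp
    have "x \<bullet> y \<le> norm x * norm y" by (rule norm_cauchy_schwarz)
    also have "\<dots> \<le> norm x * L" using nyL by (simp add: mult_left_mono)
    finally have "x \<bullet> y \<le> norm x * L" .
    moreover have "- K y \<le> N" using Kb[OF nyL] by linarith
    ultimately show ?thesis using gr[OF that] unfolding \<phi>_def by linarith
  qed
  then have bdd: "bdd_above (\<phi> ` Y)" by (intro bdd_aboveI2)
  have tm: "ereal (x \<bullet> y) - (g y + ereal (K y)) = ereal (\<phi> y)" if "y \<in> Y" for y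
    by (subst fin[OF that]) (simp add: \<phi>_def)
  have le: "fenchel (\<lambda>y. g y + ereal (K y)) x \<le> ereal (Sup (\<phi> ` Y))"
    unfolding fenchel_def
  proof (rule SUP_least)
    fix y
    show "ereal (x \<bullet> y) - (g y + ereal (K y)) \<le> ereal (Sup (\<phi> ` Y))"
    proof (cases "y \<in> Y")
      case True
      then show ?thesis using tm[OF True] cSup_upper[OF _ bdd, of "\<phi> y"] by auto
    next
      case False
      then have "g y = \<infinity>" unfolding Y_def using inf[of y] by (cases "norm y \<le> L") auto
      then show ?thesis by simp
    qed
  qed
  have each: "ereal (\<phi> y) \<le> fenchel (\<lambda>y. g y + ereal (K y)) x" if "y \<in> Y" for y
    using fenchel_ge[of x y "\<lambda>y. g y + ereal (K y)"] tm[OF that] by simp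
  have ge: "ereal (Sup (\<phi> ` Y)) \<le> fenchel (\<lambda>y. g y + ereal (K y)) x"
  proof (cases "fenchel (\<lambda>y. g y + ereal (K y)) x")
    case (real r)
    have "Sup (\<phi> ` Y) \<le> r"
      using ne each real by (intro cSup_least) auto
    then show ?thesis using real by simp
  next
    case PInf then show ?thesis by simp
  next
    case MInf then show ?thesis using each[OF y0Y] by simp
  qed
  show "fenchel (\<lambda>y. g y + ereal (K y)) x
           = ereal (Sup ((\<lambda>y. x \<bullet> y - real_of_ereal (g y) - K y) ` {y. norm y \<le> L \<and> g y \<noteq> \<infinity>}))"
    using le ge unfolding \<phi>_def Y_def by (rule antisym)
  show "bdd_above ((\<lambda>y. x \<bullet> y - real_of_ereal (g y) - K y) ` {y. norm y \<le> L \<and> g y \<noteq> \<infinity>})"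
    using bdd unfolding \<phi>_def Y_def .
  show "{y. norm y \<le> L \<and> g y \<noteq> \<infinity>} \<noteq> {}" using ne unfolding Y_def .
  have "Sup (\<phi> ` Y) \<le> norm x * L + M + N"
    by (rule cSup_least) (use ne bd in auto)
  then show "Sup ((\<lambda>y. x \<bullet> y - real_of_ereal (g y) - K y) ` {y. norm y \<le> L \<and> g y \<noteq> \<infinity>}) \<le> norm x * L + M + N"
    unfolding \<phi>_def Y_def .
qed

lemma convex_on_shift:
  assumes f: "convex_on S f" and g: "\<And>x. x \<in> S \<Longrightarrow> g x = f x + c"
  shows "convex_on S g"
  unfolding convex_on_def
proof (intro conjI ballI allI impI)
  show cS: "convex S" using f by (simp add: convex_on_def)
  fix x y and u v :: real
  assume xy: "x \<in> S" "y \<in> S" and uv: "0 \<le> u" "0 \<le> v" "u + v = 1"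
  have m: "u *\<^sub>R x + v *\<^sub>R y \<in> S" using cS xy uv by (simp add: convex_def)
  have "f (u *\<^sub>R x + v *\<^sub>R y) \<le> u * f x + v * f y" using f xy uv by (simp add: convex_on_def)
  moreover have "u * (f x + c) + v * (f y + c) = u * f x + v * f y + (u + v) * c"
    by (simp add: algebra_simps)
  ultimately show "g (u *\<^sub>R x + v *\<^sub>R y) \<le> u * g x + v * g y"
    using g[OF m] g[OF xy(1)] g[OF xy(2)] uv(3) by simp
qed

lemma glue_core:
  fixes h F :: "real \<times> 'a::real_vector \<Rightarrow> real"
  assumes S: "convex S"
    and hL: "convex_on (S \<inter> {p. fst p \<le> c}) h"
    and hR: "convex_on (S \<inter> {p. c \<le> fst p}) h"
    and F: "convex_on S F"
    and Fh: "\<And>p. p \<in> S \<Longrightarrow> F p \<le> h p"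
    and Fc: "\<And>p. p \<in> S \<Longrightarrow> fst p = c \<Longrightarrow> F p = h p"
    and p: "p \<in> S" "fst p < c" and q: "q \<in> S" "c < fst q"
    and l: "0 \<le> l" "l \<le> 1"
  shows "h (l *\<^sub>R p + (1-l) *\<^sub>R q) \<le> l * h p + (1-l) * h q"
proof -
  define \<mu> where "\<mu> = (fst q - c) / (fst q - fst p)"
  have \<mu>: "0 < \<mu>" "\<mu> < 1" using p q by (auto simp: \<mu>_def field_simps)
  define m where "m = \<mu> *\<^sub>R p + (1-\<mu>) *\<^sub>R q"
  have mS: "m \<in> S" using S p q \<mu> unfolding m_def convex_def by simp
  have "\<mu> * (fst q - fst p) = fst q - c" using p q by (simp add: \<mu>_def)
  moreover have "fst m = fst q - \<mu> * (fst q - fst p)" by (simp add: m_def algebra_simps)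
  ultimately have fm: "fst m = c" by simp
  have "h m = F m" using Fc[OF mS fm] by simp
  also have "\<dots> \<le> \<mu> * F p + (1-\<mu>) * F q" using F p q \<mu> unfolding convex_on_def m_def by simp
  also have "\<dots> \<le> \<mu> * h p + (1-\<mu>) * h q"
    using Fh[OF p(1)] Fh[OF q(1)] \<mu> by (intro add_mono mult_left_mono) auto
  finally have hm: "h m \<le> \<mu> * h p + (1-\<mu>) * h q" .
  show ?thesis
  proof (cases "\<mu> \<le> l")
    case True
    define \<alpha> where "\<alpha> = (l - \<mu>) / (1 - \<mu>)"
    have \<alpha>: "0 \<le> \<alpha>" "\<alpha> \<le> 1" using True \<mu> l by (auto simp: \<alpha>_def field_simps)
    have c1b: "(1-\<alpha>)*(1-\<mu>) = 1-l" using \<mu> by (simp add: \<alpha>_def field_simps)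
    have "\<alpha> + (1-\<alpha>)*\<mu> = 1 - (1-\<alpha>)*(1-\<mu>)" by (simp add: algebra_simps)
    then have c1: "\<alpha> + (1-\<alpha>)*\<mu> = l" "(1-\<alpha>)*(1-\<mu>) = 1-l" using c1b by simp_all
    have "\<alpha> *\<^sub>R p + (1-\<alpha>) *\<^sub>R m = (\<alpha> + (1-\<alpha>)*\<mu>) *\<^sub>R p + ((1-\<alpha>)*(1-\<mu>)) *\<^sub>R q"
      unfolding m_def by (simp add: scaleR_add_right scaleR_add_left scaleR_scaleR)
    then have s: "l *\<^sub>R p + (1-l) *\<^sub>R q = \<alpha> *\<^sub>R p + (1-\<alpha>) *\<^sub>R m" using c1 by simp
    have pL: "p \<in> S \<inter> {p. fst p \<le> c}" using p by auto
    have mL: "m \<in> S \<inter> {p. fst p \<le> c}" using mS fm by auto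
    have "h (\<alpha> *\<^sub>R p + (1-\<alpha>) *\<^sub>R m) \<le> \<alpha> * h p + (1-\<alpha>) * h m"
      using hL pL mL \<alpha> unfolding convex_on_def by simp
    also have "\<dots> \<le> \<alpha> * h p + (1-\<alpha>) * (\<mu> * h p + (1-\<mu>) * h q)"
      using hm \<alpha> by (intro add_left_mono mult_left_mono) auto
    also have "\<dots> = (\<alpha> + (1-\<alpha>)*\<mu>) * h p + ((1-\<alpha>)*(1-\<mu>)) * h q" by (simp add: algebra_simps)
    also have "\<dots> = l * h p + (1-l) * h q" using c1 by simp
    finally show ?thesis using s by simp
  next
    case False
    define \<beta> where "\<beta> = l / \<mu>"
    have \<beta>: "0 \<le> \<beta>" "\<beta> \<le> 1" using False \<mu> l by (auto simp: \<beta>_def field_simps)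
    have c2: "\<beta>*\<mu> = l" "\<beta>*(1-\<mu>) + (1-\<beta>) = 1-l" using \<mu> by (simp_all add: \<beta>_def field_simps)
    have "\<beta> *\<^sub>R m + (1-\<beta>) *\<^sub>R q = (\<beta>*\<mu>) *\<^sub>R p + (\<beta>*(1-\<mu>) + (1-\<beta>)) *\<^sub>R q"
      unfolding m_def by (simp add: scaleR_add_right scaleR_add_left scaleR_scaleR)
    then have s: "l *\<^sub>R p + (1-l) *\<^sub>R q = \<beta> *\<^sub>R m + (1-\<beta>) *\<^sub>R q" using c2 by simp
    have qR: "q \<in> S \<inter> {p. c \<le> fst p}" using q by auto
    have mR: "m \<in> S \<inter> {p. c \<le> fst p}" using mS fm by auto
    have "h (\<beta> *\<^sub>R m + (1-\<beta>) *\<^sub>R q) \<le> \<beta> * h m + (1-\<beta>) * h q"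
      using hR qR mR \<beta> unfolding convex_on_def by simp
    also have "\<dots> \<le> \<beta> * (\<mu> * h p + (1-\<mu>) * h q) + (1-\<beta>) * h q"
      using hm \<beta> by (intro add_right_mono mult_left_mono) auto
    also have "\<dots> = (\<beta>*\<mu>) * h p + (\<beta>*(1-\<mu>) + (1-\<beta>)) * h q" by (simp add: algebra_simps)
    also have "\<dots> = l * h p + (1-l) * h q" using c2 by simp
    finally show ?thesis using s by simp
  qed
qed

lemma glue:
  fixes h F :: "real \<times> 'a::real_vector \<Rightarrow> real"
  assumes S: "convex S"
    and hL: "convex_on (S \<inter> {p. fst p \<le> c}) h"
    and hR: "convex_on (S \<inter> {p. c \<le> fst p}) h"
    and F: "convex_on S F"
    and Fh: "\<And>p. p \<in> S \<Longrightarrow> F p \<le> h p"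
    and Fc: "\<And>p. p \<in> S \<Longrightarrow> fst p = c \<Longrightarrow> F p = h p"
  shows "convex_on S h"
proof (rule convex_onI[OF _ S])
  fix t :: real and x y assume t: "0 < t" "t < 1" and xy: "x \<in> S" "y \<in> S"
  show "h ((1 - t) *\<^sub>R x + t *\<^sub>R y) \<le> (1 - t) * h x + t * h y"
  proof (cases "fst x \<le> c \<and> fst y \<le> c")
    case True
    then show ?thesis using hL xy t unfolding convex_on_def by simp
  next
    case nL: False
    show ?thesis
    proof (cases "c \<le> fst x \<and> c \<le> fst y")
      case True
      then show ?thesis using hR xy t unfolding convex_on_def by simp
    next
      case False
      then consider "fst x < c" "c < fst y" | "fst y < c" "c < fst x" using nL by linarith
      then show ?thesis
      proof cases
        case 1
        have "h ((1-t) *\<^sub>R x + (1-(1-t)) *\<^sub>R y) \<le> (1-t) * h x + (1-(1-t)) * h y"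
          by (rule glue_core[OF S hL hR F Fh Fc xy(1) 1(1) xy(2) 1(2)]) (use t in auto)
        then show ?thesis by simp
      next
        case 2
        have "h (t *\<^sub>R y + (1-t) *\<^sub>R x) \<le> t * h y + (1-t) * h x"
          by (rule glue_core[OF S hL hR F Fh Fc xy(2) 2(1) xy(1) 2(2)]) (use t in auto)
        then show ?thesis by (simp add: add.commute)
      qed
    qed
  qed
qed




lemma sq_ineq:
  fixes u v a b :: real
  assumes "0 \<le> u" "0 \<le> v" "u + v = 1"
  shows "(u * a + v * b)\<^sup>2 \<le> u * a\<^sup>2 + v * b\<^sup>2"
proof -
  have v: "v = 1 - u" using assms by simp
  have "u * a\<^sup>2 + v * b\<^sup>2 - (u * a + v * b)\<^sup>2 = u * v * (a - b)\<^sup>2"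
    unfolding v by (simp add: power2_eq_square algebra_simps)
  moreover have "0 \<le> u * v * (a - b)\<^sup>2" using assms by simp
  ultimately show ?thesis by linarith
qed

lemma norm_sq_convex:
  fixes x y :: "'a::real_normed_vector"
  assumes uv: "0 \<le> u" "0 \<le> v" "u + v = 1"
  shows "(norm (u *\<^sub>R x + v *\<^sub>R y))\<^sup>2 \<le> u * (norm x)\<^sup>2 + v * (norm y)\<^sup>2"
proof -
  have "norm (u *\<^sub>R x + v *\<^sub>R y) \<le> u * norm x + v * norm y"
    using norm_triangle_ineq[of "u *\<^sub>R x" "v *\<^sub>R y"] uv by simp
  then have "(norm (u *\<^sub>R x + v *\<^sub>R y))\<^sup>2 \<le> (u * norm x + v * norm y)\<^sup>2"
    by (rule power_mono) simp
  also have "\<dots> \<le> u * (norm x)\<^sup>2 + v * (norm y)\<^sup>2" by (rule sq_ineq[OF uv])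
  finally show ?thesis .
qed

lemma normP: "(norm (t::real, x))\<^sup>2 = t\<^sup>2 + (norm x)\<^sup>2"
  by (simp add: norm_Pair)

lemma sup_convex:
  fixes a :: "'a::euclidean_space \<Rightarrow> real" and K :: "real \<Rightarrow> 'a \<Rightarrow> real"
  assumes A: "convex A" and Yne: "Y \<noteq> {}" and C: "0 \<le> C"
    and bdd: "\<And>t x. t \<in> A \<Longrightarrow> bdd_above ((\<lambda>y. x \<bullet> y - a y - K t y) ` Y)"
    and cvx: "\<And>y. y \<in> Y \<Longrightarrow> convex_on A (\<lambda>t. - K t y + C/2 * t\<^sup>2)"
  shows "convex_on (A \<times> UNIV) (\<lambda>p. Sup ((\<lambda>y. snd p \<bullet> y - a y - K (fst p) y) ` Y) + C/2 * (norm p)\<^sup>2)"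
  unfolding convex_on_def
proof (intro conjI ballI allI impI)
  show "convex (A \<times> (UNIV::'a set))" using A by (simp add: convex_Times)
  fix p q :: "real \<times> 'a" and u v :: real
  assume pq: "p \<in> A \<times> UNIV" "q \<in> A \<times> UNIV" and uv: "0 \<le> u" "0 \<le> v" "u + v = 1"
  obtain t1 :: real and x1 :: 'a where p: "p = (t1, x1)" by (cases p)
  obtain t2 :: real and x2 :: 'a where q: "q = (t2, x2)" by (cases q)
  have t12: "t1 \<in> A" "t2 \<in> A" using pq p q by auto
  define t where "t = u * t1 + v * t2"
  define x where "x = u *\<^sub>R x1 + v *\<^sub>R x2"
  have tA: "t \<in> A" using A t12 uv unfolding convex_def t_def by simp
  have sp: "u *\<^sub>R p + v *\<^sub>R q = (t, x)" by (simp add: p q t_def x_def)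
  define S1 where "S1 = Sup ((\<lambda>y. x1 \<bullet> y - a y - K t1 y) ` Y)"
  define S2 where "S2 = Sup ((\<lambda>y. x2 \<bullet> y - a y - K t2 y) ` Y)"
  define S where "S = Sup ((\<lambda>y. x \<bullet> y - a y - K t y) ` Y)"
  define D where "D = C/2 * (u * (t1\<^sup>2 + (norm x1)\<^sup>2) + v * (t2\<^sup>2 + (norm x2)\<^sup>2) - (t\<^sup>2 + (norm x)\<^sup>2))"
  have cxn: "C/2 * (norm x)\<^sup>2 \<le> C/2 * (u * (norm x1)\<^sup>2 + v * (norm x2)\<^sup>2)"
    unfolding x_def using C by (intro mult_left_mono norm_sq_convex uv) auto
  have key: "x \<bullet> y - a y - K t y \<le> u * (x1 \<bullet> y - a y - K t1 y) + v * (x2 \<bullet> y - a y - K t2 y) + D"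
    if "y \<in> Y" for y
  proof -
    have ct: "- K t y + C/2 * t\<^sup>2 \<le> u * (- K t1 y + C/2 * t1\<^sup>2) + v * (- K t2 y + C/2 * t2\<^sup>2)"
      using cvx[OF that] t12 uv unfolding convex_on_def t_def by simp
    have lin: "x \<bullet> y = u * (x1 \<bullet> y) + v * (x2 \<bullet> y)" by (simp add: x_def inner_add_left)
    have ay: "u * a y + v * a y = a y" using uv(3) by (metis distrib_right mult_1)
    have e1: "u * (x1 \<bullet> y - a y - K t1 y) + v * (x2 \<bullet> y - a y - K t2 y) + D
       = (u * (x1 \<bullet> y) + v * (x2 \<bullet> y)) - (u * a y + v * a y) + (u * (- K t1 y + C/2 * t1\<^sup>2) + v * (- K t2 y + C/2 * t2\<^sup>2))
         + C/2 * (u * (norm x1)\<^sup>2 + v * (norm x2)\<^sup>2) - C/2 * t\<^sup>2 - C/2 * (norm x)\<^sup>2"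
      unfolding D_def by (simp add: algebra_simps)
    show ?thesis unfolding e1 lin ay using ct cxn by linarith
  qed
  have bS1: "bdd_above ((\<lambda>y. x1 \<bullet> y - a y - K t1 y) ` Y)" using bdd[OF t12(1)] .
  have bS2: "bdd_above ((\<lambda>y. x2 \<bullet> y - a y - K t2 y) ` Y)" using bdd[OF t12(2)] .
  have "S \<le> u * S1 + v * S2 + D"
    unfolding S_def
  proof (rule cSup_least)
    show "(\<lambda>y. x \<bullet> y - a y - K t y) ` Y \<noteq> {}" using Yne by simp
    fix z assume "z \<in> (\<lambda>y. x \<bullet> y - a y - K t y) ` Y"
    then obtain y where y: "y \<in> Y" and z: "z = x \<bullet> y - a y - K t y" by auto
    have "x1 \<bullet> y - a y - K t1 y \<le> S1" unfolding S1_def using y bS1 by (intro cSup_upper) auto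
    moreover have "x2 \<bullet> y - a y - K t2 y \<le> S2" unfolding S2_def using y bS2 by (intro cSup_upper) auto
    ultimately have "u * (x1 \<bullet> y - a y - K t1 y) + v * (x2 \<bullet> y - a y - K t2 y) \<le> u * S1 + v * S2"
      using uv by (intro add_mono mult_left_mono) auto
    then show "z \<le> u * S1 + v * S2 + D" using key[OF y] z by linarith
  qed
  moreover have "u * (S1 + C/2 * (norm p)\<^sup>2) + v * (S2 + C/2 * (norm q)\<^sup>2)
      = u * S1 + v * S2 + D + C/2 * (norm (t, x))\<^sup>2"
    unfolding D_def p q normP by (simp add: algebra_simps)
  ultimately show "Sup ((\<lambda>y. snd (u *\<^sub>R p + v *\<^sub>R q) \<bullet> y - a y - K (fst (u *\<^sub>R p + v *\<^sub>R q)) y) ` Y)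
      + C/2 * (norm (u *\<^sub>R p + v *\<^sub>R q))\<^sup>2
    \<le> u * (Sup ((\<lambda>y. snd p \<bullet> y - a y - K (fst p) y) ` Y) + C/2 * (norm p)\<^sup>2)
      + v * (Sup ((\<lambda>y. snd q \<bullet> y - a y - K (fst q) y) ` Y) + C/2 * (norm q)\<^sup>2)"
    unfolding sp using p q S_def S1_def S2_def by simp
qed

lemma int_convex:
  fixes h :: "real \<Rightarrow> real"
  assumes T: "0 \<le> T" and hc: "continuous_on {0..T} h" and B: "0 \<le> B"
    and hL: "\<And>s t. s \<in> {0..T} \<Longrightarrow> t \<in> {0..T} \<Longrightarrow> s \<le> t \<Longrightarrow> h t - h s \<le> B * (t - s)"
  shows "convex_on {0..T} (\<lambda>t. - integral {0..t} h + B/2 * t\<^sup>2)"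
proof -
  define cl where "cl = (\<lambda>\<tau>::real. max 0 (min T \<tau>))"
  define g where "g = (\<lambda>\<tau>. h (cl \<tau>))"
  have clr: "cl \<tau> \<in> {0..T}" for \<tau> using T by (auto simp: cl_def)
  have clc: "continuous_on UNIV cl" unfolding cl_def by (intro continuous_intros)
  have gc: "continuous_on UNIV g"
    unfolding g_def by (rule continuous_on_compose2[OF hc clc]) (use clr in auto)
  define P where "P = (\<lambda>t. integral {-1..t} g)"
  have Pd: "(P has_real_derivative g t) (at t)" if "t \<in> {-1<..<T+1}" for t
  proof -
    have "(P has_real_derivative g t) (at t within {-1..T+1})"
      unfolding P_def using that by (intro integral_has_real_derivative continuous_on_subset[OF gc]) auto
    moreover have "at t within {-1..T+1} = at t" using that by (intro at_within_interior) auto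
    ultimately show ?thesis by simp
  qed
  define f where "f = (\<lambda>t. - P t + B/2 * t\<^sup>2)"
  have fd: "(f has_real_derivative (- g t + B * t)) (at t)" if "t \<in> {-1<..<T+1}" for t
    unfolding f_def by (auto intro!: derivative_eq_intros Pd[OF that])
  have mono: "- g x + B * x \<le> - g y + B * y" if "x \<le> y" for x y
  proof -
    have c1: "cl x \<le> cl y" and c2: "cl y - cl x \<le> y - x" using that by (auto simp: cl_def)
    have "g y - g x \<le> B * (cl y - cl x)" unfolding g_def using hL[OF clr clr c1] .
    also have "\<dots> \<le> B * (y-x)" using B c2 by (simp add: mult_left_mono)
    finally show ?thesis by (simp add: algebra_simps)
  qed
  have "convex_on {-1<..<T+1} f"
    by (rule convex_on_realI[where f'="\<lambda>t. - g t + B * t"]) (use fd mono in auto)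
  then have f0: "convex_on {0..T} f" by (rule convex_on_subset) auto
  show ?thesis
  proof (rule convex_on_shift[OF f0, where c="integral {-1..0} g"])
    fix t assume t: "t \<in> {0..T}"
    have int: "g integrable_on {-1..t}" by (intro integrable_continuous_real continuous_on_subset[OF gc]) auto
    have comb: "integral {-1..0} g + integral {0..t} g = integral {-1..t} g"
      by (rule Henstock_Kurzweil_Integration.integral_combine) (use t int in auto)
    have gh: "g \<tau> = h \<tau>" if "\<tau> \<in> {0..t}" for \<tau>
    proof -
      have "cl \<tau> = \<tau>" using that t by (auto simp: cl_def)
      then show ?thesis by (simp add: g_def)
    qed
    moreover have "integral {0..t} g = integral {0..t} h"
      by (rule integral_cong) (rule gh)
    ultimately show "- integral {0..t} h + B/2 * t\<^sup>2 = f t + integral {-1..0} g"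
      unfolding f_def P_def using comb by linarith
  qed
qed




lemma H_cont:
  assumes "C1_on S H"
  shows "continuous_on S H"
proof -
  obtain f' where d: "\<forall>z\<in>S. (H has_derivative blinfun_apply (f' z)) (at z within S)"
    using assms unfolding C1_on_def by blast
  show ?thesis by (rule has_derivative_continuous_on) (use d in auto)
qed

lemma H_facts:
  fixes H :: "real \<times> 'a::euclidean_space \<Rightarrow> real"
  assumes C1: "C1_on ({0..T} \<times> UNIV) H"
  shows "\<exists>B>0. \<forall>t\<in>{0..T}. \<forall>s\<in>{0..T}. \<forall>y. norm y \<le> L \<longrightarrow>
            \<bar>H (t, y) - H (s, y)\<bar> \<le> B * \<bar>t - s\<bar> \<and> \<bar>H (t, y)\<bar> \<le> B"
proof -
  obtain f' where d: "\<forall>z\<in>{0..T} \<times> UNIV. (H has_derivative blinfun_apply (f' z)) (at z within {0..T} \<times> UNIV)"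
    and c: "continuous_on ({0..T} \<times> UNIV) f'"
    using C1 unfolding C1_on_def by blast
  define S where "S = {0..T} \<times> cball (0::'a) L"
  have SS: "S \<subseteq> {0..T} \<times> UNIV" unfolding S_def by auto
  have cS: "compact S" unfolding S_def by (intro compact_Times compact_Icc compact_cball)
  have cvS: "convex S" unfolding S_def by (intro convex_Times convex_real_interval convex_cball)
  have Hc: "continuous_on ({0..T} \<times> UNIV) H" using H_cont[OF C1] .
  have "bounded (f' ` S)"
    by (intro compact_imp_bounded compact_continuous_image continuous_on_subset[OF c SS] cS)
  then obtain B1 where B1: "\<And>z. z \<in> S \<Longrightarrow> norm (f' z) \<le> B1" unfolding bounded_iff by auto
  have "bounded (H ` S)"
    by (intro compact_imp_bounded compact_continuous_image continuous_on_subset[OF Hc SS] cS)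
  then obtain B2 where B2: "\<And>z. z \<in> S \<Longrightarrow> norm (H z) \<le> B2" unfolding bounded_iff by auto
  define B where "B = max (max B1 B2) 0 + 1"
  have Bpos: "B > 0" unfolding B_def by simp
  have BB: "B1 \<le> B" "B2 \<le> B" unfolding B_def by auto
  have "\<bar>H (t, y) - H (s, y)\<bar> \<le> B * \<bar>t - s\<bar> \<and> \<bar>H (t, y)\<bar> \<le> B"
    if ts: "t \<in> {0..T}" "s \<in> {0..T}" and y: "norm y \<le> L" for t s y
  proof
    have z: "(t, y) \<in> S" "(s, y) \<in> S" using ts y unfolding S_def by auto
    have der: "(H has_derivative blinfun_apply (f' z)) (at z within S)" if "z \<in> S" for z
      using d SS that by (intro has_derivative_subset[OF _ SS]) auto
    have on: "onorm (blinfun_apply (f' z)) \<le> B1" if "z \<in> S" for z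
      using B1[OF that] by (simp add: norm_blinfun.rep_eq)
    have "norm (H (t, y) - H (s, y)) \<le> B1 * norm ((t, y) - (s, y))"
      by (rule differentiable_bound[OF cvS der on z])
    moreover have "norm ((t, y) - (s, y)) = \<bar>t - s\<bar>" by (simp add: norm_Pair)
    ultimately have "\<bar>H (t, y) - H (s, y)\<bar> \<le> B1 * \<bar>t - s\<bar>" by simp
    also have "\<dots> \<le> B * \<bar>t - s\<bar>" using BB by (simp add: mult_right_mono)
    finally show "\<bar>H (t, y) - H (s, y)\<bar> \<le> B * \<bar>t - s\<bar>" .
    show "\<bar>H (t, y)\<bar> \<le> B" using B2[OF z(1)] BB by simp
  qed
  then show ?thesis using Bpos by blast
qed

lemma norm_id:
  fixes a b :: "'a::real_inner"
  shows "l * (norm a)\<^sup>2 + (1-l) * (norm b)\<^sup>2 - (norm (l *\<^sub>R a + (1-l) *\<^sub>R b))\<^sup>2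
       = l * (1-l) * (norm (a - b))\<^sup>2"
  unfolding power2_norm_eq_inner
  by (simp add: inner_add_left inner_add_right inner_diff_left inner_diff_right inner_commute algebra_simps)




lemma lin_aux: "a + q \<le> r + s + (q + p) \<Longrightarrow> a - r - s \<le> (p::real)"
  by linarith

theorem theorem3p6:
  fixes T tp :: real
    and H :: "real \<times> 'a::euclidean_space \<Rightarrow> real"
    and \<sigma> :: "'a \<Rightarrow> real"
    and u :: "real \<times> 'a \<Rightarrow> ereal"
  assumes "T > 0"
    and "C1_on ({0..T} \<times> UNIV) H"
    and "convex_on UNIV \<sigma>"
    and "\<exists>L. L-lipschitz_on UNIV \<sigma>"
    and "tp \<in> {0<..<T}"
    and "cond_A2 H 0 tp"
    and "cond_A2 H tp T"
    and u_def: "\<And>t x. u (t, x) =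
      (if t \<le> tp
       then fenchel (\<lambda>y. fenchel (\<lambda>q. ereal (\<sigma> q)) y
                          + ereal (integral {0..t} (\<lambda>\<tau>. H (\<tau>, y)))) x
       else fenchel (\<lambda>y. fenchel (\<lambda>z. u (tp, z)) y
                          + ereal (integral {tp..t} (\<lambda>\<tau>. H (\<tau>, y)))) x)"
  shows "(\<forall>y\<in>{0<..<T} \<times> UNIV. \<bar>u y\<bar> \<noteq> \<infinity>)
         \<and> semiconvex_lin ({0<..<T} \<times> UNIV) (\<lambda>y. real_of_ereal (u y))"
proof -
  obtain L where Lip: "L-lipschitz_on UNIV \<sigma>" using assms(4) by blast
  have L0: "0 \<le> L" using Lip by (rule lipschitz_on_nonneg)
  have tp: "0 < tp" "tp < T" using assms(5) by auto
  have tpT: "tp \<in> {0..T}" using tp by auto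
  have Hc: "continuous_on ({0..T} \<times> UNIV) H" using H_cont[OF assms(2)] .
  obtain B where Bpos: "B > 0" and HB: "\<And>t s y. t \<in> {0..T} \<Longrightarrow> s \<in> {0..T} \<Longrightarrow> norm y \<le> L \<Longrightarrow>
      \<bar>H (t, y) - H (s, y)\<bar> \<le> B * \<bar>t - s\<bar> \<and> \<bar>H (t, y)\<bar> \<le> B"
    using H_facts[OF assms(2), of L] by blast
  have \<sigma>up: "\<sigma> q \<le> \<sigma> 0 + L * norm q" for q
  proof -
    have "dist (\<sigma> q) (\<sigma> 0) \<le> L * dist q 0" by (rule lipschitz_onD[OF Lip]) auto
    then show ?thesis by (simp add: dist_real_def)
  qed
  obtain y0 Bc where \<sigma>low: "\<And>q. y0 \<bullet> q - Bc \<le> \<sigma> q"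
  proof -
    define E where "E = {xy :: 'a \<times> real. \<sigma> (fst xy) \<le> snd xy}"
    have \<sigma>c: "continuous_on UNIV \<sigma>" using Lip by (rule lipschitz_on_continuous_on)
    have "E = epigraph UNIV \<sigma>" unfolding E_def epigraph_def by simp
    then have cE: "convex E" using convex_epigraphI[OF assms(3)] by simp
    have c1: "continuous_on UNIV (\<lambda>xy::'a \<times> real. \<sigma> (fst xy))"
      by (rule continuous_on_compose2[OF \<sigma>c]) (auto intro: continuous_intros)
    have clE: "closed E" unfolding E_def
      by (rule closed_Collect_le[OF c1]) (intro continuous_intros)
    have zE: "(0, \<sigma> 0 - 1) \<notin> E" unfolding E_def by simp
    obtain a b where ab: "a \<bullet> (0, \<sigma> 0 - 1) < b" "\<forall>x\<in>E. b < a \<bullet> x"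
      using separating_hyperplane_closed_point[OF cE clE zE] by blast
    obtain a1 :: 'a and a2 :: real where a: "a = (a1, a2)" by (cases a)
    have h1: "a2 * (\<sigma> 0 - 1) < b" using ab(1) a by simp
    have h2: "b < a1 \<bullet> q + a2 * r" if "\<sigma> q \<le> r" for q r
      using ab(2) a that unfolding E_def by auto
    have "b < a2 * \<sigma> 0" using h2[of 0 "\<sigma> 0"] by simp
    moreover have "a2 * (\<sigma> 0 - 1) = a2 * \<sigma> 0 - a2" by (simp add: algebra_simps)
    ultimately have a2: "a2 > 0" using h1 by linarith
    show ?thesis
    proof (rule that[of "- (1/a2) *\<^sub>R a1" "- b / a2"])
      fix q
      have "b < a1 \<bullet> q + a2 * \<sigma> q" using h2 by simp
      then have "(b - a1 \<bullet> q) / a2 < \<sigma> q" using a2 by (simp add: field_simps)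
      moreover have "(- (1/a2) *\<^sub>R a1) \<bullet> q - (- b / a2) = (b - a1 \<bullet> q) / a2"
        using a2 by (simp add: diff_divide_distrib)
      ultimately show "(- (1/a2) *\<^sub>R a1) \<bullet> q - (- b / a2) \<le> \<sigma> q" by simp
    qed
  qed
  define \<sigma>s where "\<sigma>s = fenchel (\<lambda>q. ereal (\<sigma> q))"
  have \<sigma>s_inf: "\<sigma>s y = \<infinity>" if "norm y > L" for y
    unfolding \<sigma>s_def by (rule conj_infty[OF \<sigma>up L0 that])
  have \<sigma>s_lb: "ereal (- \<sigma> 0) \<le> \<sigma>s y" for y unfolding \<sigma>s_def by (rule conj_lb)
  have \<sigma>s_y0: "\<sigma>s y0 \<noteq> \<infinity>" using conj_y0[of y0 Bc \<sigma>, OF \<sigma>low] unfolding \<sigma>s_def by auto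
  define I where "I = (\<lambda>t y. integral {0..t} (\<lambda>\<tau>. H (\<tau>, y)))"
  have Hcy: "continuous_on {0..T} (\<lambda>\<tau>. H (\<tau>, y))" for y
    by (rule continuous_on_compose2[OF Hc]) (auto intro!: continuous_intros)
  have intH: "(\<lambda>\<tau>. H (\<tau>, y)) integrable_on {a..b}" if "0 \<le> a" "b \<le> T" for a b y
    by (rule integrable_continuous_real, rule continuous_on_subset[OF Hcy]) (use that in auto)
  have Ib: "\<bar>I t y\<bar> \<le> T * B" if t: "t \<in> {0..T}" and y: "norm y \<le> L" for t y
  proof -
    have hi: "((\<lambda>\<tau>. H (\<tau>, y)) has_integral I t y) {0..t}"
      unfolding I_def by (rule integrable_integral, rule intH) (use t in auto)
    have "norm (I t y) \<le> B * Henstock_Kurzweil_Integration.content {0..t}"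
    proof (rule has_integral_bound_real[where S="{}", OF _ _ hi])
      show "0 \<le> B" using Bpos by simp
      show "finite {}" by simp
      fix x assume "x \<in> {0..t} - {}"
      then have "x \<in> {0..T}" using t by auto
      then show "norm (H (x, y)) \<le> B" using HB[of x x y] y by simp
    qed
    also have "\<dots> = B * t" using t by simp
    also have "\<dots> \<le> T * B" using t Bpos by (simp add: mult.commute mult_left_mono)
    finally show ?thesis by simp
  qed
  have Iadd: "I t y = I tp y + integral {tp..t} (\<lambda>\<tau>. H (\<tau>, y))" if t: "t \<in> {tp..T}" for t y
    unfolding I_def
    by (rule Henstock_Kurzweil_Integration.integral_combine[symmetric]) (use t tp intH in auto)
  define Y1 where "Y1 = {y. norm y \<le> L \<and> \<sigma>s y \<noteq> \<infinity>}"
  define v where "v = (\<lambda>t x. Sup ((\<lambda>y. x \<bullet> y - real_of_ereal (\<sigma>s y) - I t y) ` Y1))"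
  have SR1: "fenchel (\<lambda>y. \<sigma>s y + ereal (I t y)) x = ereal (v t x)
       \<and> bdd_above ((\<lambda>y. x \<bullet> y - real_of_ereal (\<sigma>s y) - I t y) ` Y1)
       \<and> Y1 \<noteq> {} \<and> v t x \<le> norm x * L + \<sigma> 0 + T * B" if t: "t \<in> {0..T}" for t x
  proof -
    have Kb: "\<And>y. norm y \<le> L \<Longrightarrow> \<bar>I t y\<bar> \<le> T * B" using Ib[OF t] .
    have a1: "fenchel (\<lambda>y. \<sigma>s y + ereal (I t y)) x = ereal (v t x)"
      unfolding v_def Y1_def
      by (rule sup_rep(1)[where M="\<sigma> 0" and ?y0.0=y0 and N="T * B"]) (use \<sigma>s_inf \<sigma>s_lb \<sigma>s_y0 Kb in auto)
    have a2: "bdd_above ((\<lambda>y. x \<bullet> y - real_of_ereal (\<sigma>s y) - I t y) ` Y1)"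
      unfolding Y1_def
      by (rule sup_rep(2)[where M="\<sigma> 0" and ?y0.0=y0 and N="T * B"]) (use \<sigma>s_inf \<sigma>s_lb \<sigma>s_y0 Kb in auto)
    have a3: "Y1 \<noteq> {}"
      unfolding Y1_def
      by (rule sup_rep(3)[where M="\<sigma> 0" and ?y0.0=y0 and N="T * B" and K="I t"]) (use \<sigma>s_inf \<sigma>s_lb \<sigma>s_y0 Kb in auto)
    have a4: "v t x \<le> norm x * L + \<sigma> 0 + T * B"
      unfolding v_def Y1_def
      by (rule sup_rep(4)[where M="\<sigma> 0" and ?y0.0=y0 and N="T * B"]) (use \<sigma>s_inf \<sigma>s_lb \<sigma>s_y0 Kb in auto)
    show ?thesis using a1 a2 a3 a4 by blast
  qed
  define \<omega> where "\<omega> = (\<lambda>z. v tp z)"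
  have y0Y1: "y0 \<in> Y1"
  proof -
    have "norm y0 \<le> L"
    proof (rule ccontr)
      assume "\<not> norm y0 \<le> L" then have "\<sigma>s y0 = \<infinity>" using \<sigma>s_inf by simp
      with \<sigma>s_y0 show False by simp
    qed
    then show ?thesis using \<sigma>s_y0 unfolding Y1_def by simp
  qed
  have \<omega>up: "\<omega> q \<le> (\<sigma> 0 + T * B) + L * norm q" for q
    using SR1[OF tpT, of q] unfolding \<omega>_def by (simp add: mult.commute)
  have \<omega>low: "y0 \<bullet> q - (real_of_ereal (\<sigma>s y0) + I tp y0) \<le> \<omega> q" for q
  proof -
    have "q \<bullet> y0 - real_of_ereal (\<sigma>s y0) - I tp y0 \<le> v tp q"
      unfolding v_def by (rule cSup_upper) (use y0Y1 SR1[OF tpT, of q] in auto)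
    then show ?thesis unfolding \<omega>_def by (simp add: inner_commute)
  qed
  define \<omega>s where "\<omega>s = fenchel (\<lambda>z. ereal (\<omega> z))"
  have \<omega>s_inf: "\<omega>s y = \<infinity>" if "norm y > L" for y
    unfolding \<omega>s_def by (rule conj_infty[OF \<omega>up L0 that])
  have \<omega>s_lb: "ereal (- \<omega> 0) \<le> \<omega>s y" for y unfolding \<omega>s_def by (rule conj_lb)
  have \<omega>s_y0: "\<omega>s y0 \<noteq> \<infinity>" using conj_y0[of y0 _ \<omega>, OF \<omega>low] unfolding \<omega>s_def by auto
  define J where "J = (\<lambda>t y. integral {tp..t} (\<lambda>\<tau>. H (\<tau>, y)))"
  have JI: "J t y = I t y - I tp y" if "t \<in> {tp..T}" for t y
    using Iadd[OF that, of y] unfolding J_def by simp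
  have Jb: "\<bar>J t y\<bar> \<le> 2 * (T * B)" if t: "t \<in> {tp..T}" and y: "norm y \<le> L" for t y
  proof -
    have "t \<in> {0..T}" using t tp by auto
    then show ?thesis using JI[OF t, of y] Ib[OF _ y, of t] Ib[OF tpT y] by linarith
  qed
  define Y2 where "Y2 = {y. norm y \<le> L \<and> \<omega>s y \<noteq> \<infinity>}"
  define w where "w = (\<lambda>t x. Sup ((\<lambda>y. x \<bullet> y - real_of_ereal (\<omega>s y) - J t y) ` Y2))"
  have SR2: "fenchel (\<lambda>y. \<omega>s y + ereal (J t y)) x = ereal (w t x)
       \<and> bdd_above ((\<lambda>y. x \<bullet> y - real_of_ereal (\<omega>s y) - J t y) ` Y2)
       \<and> Y2 \<noteq> {}" if t: "t \<in> {tp..T}" for t x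
  proof -
    have Kb: "\<And>y. norm y \<le> L \<Longrightarrow> \<bar>J t y\<bar> \<le> 2 * (T * B)" using Jb[OF t] .
    have a1: "fenchel (\<lambda>y. \<omega>s y + ereal (J t y)) x = ereal (w t x)"
      unfolding w_def Y2_def
      by (rule sup_rep(1)[where M="\<omega> 0" and ?y0.0=y0 and N="2 * (T * B)"]) (use \<omega>s_inf \<omega>s_lb \<omega>s_y0 Kb in auto)
    have a2: "bdd_above ((\<lambda>y. x \<bullet> y - real_of_ereal (\<omega>s y) - J t y) ` Y2)"
      unfolding Y2_def
      by (rule sup_rep(2)[where M="\<omega> 0" and ?y0.0=y0 and N="2 * (T * B)"]) (use \<omega>s_inf \<omega>s_lb \<omega>s_y0 Kb in auto)
    have a3: "Y2 \<noteq> {}"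
      unfolding Y2_def
      by (rule sup_rep(3)[where M="\<omega> 0" and ?y0.0=y0 and N="2 * (T * B)" and K="J t"]) (use \<omega>s_inf \<omega>s_lb \<omega>s_y0 Kb in auto)
    show ?thesis using a1 a2 a3 by blast
  qed
  have uL: "u (t, x) = fenchel (\<lambda>y. \<sigma>s y + ereal (I t y)) x" if "t \<le> tp" for t x
    by (subst u_def) (simp add: that \<sigma>s_def I_def)
  have uL': "u (t, x) = ereal (v t x)" if "t \<in> {0..tp}" for t x
    using uL[of t x] SR1[of t x] that tp by auto
  have u\<omega>: "(\<lambda>z. u (tp, z)) = (\<lambda>z. ereal (\<omega> z))"
    using uL'[of tp] tp unfolding \<omega>_def by auto
  have uR: "u (t, x) = ereal (w t x)" if t: "t \<in> {tp<..T}" for t x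
  proof -
    have "u (t, x) = fenchel (\<lambda>y. fenchel (\<lambda>z. u (tp, z)) y + ereal (J t y)) x"
      by (subst u_def) (use t in \<open>simp add: J_def\<close>)
    also have "\<dots> = fenchel (\<lambda>y. \<omega>s y + ereal (J t y)) x" unfolding u\<omega> \<omega>s_def ..
    also have "\<dots> = ereal (w t x)" using SR2[of t x] t by auto
    finally show ?thesis .
  qed
  have f0: "fenchel (\<lambda>y. \<sigma>s y + ereal (I tp y)) = (\<lambda>z. ereal (\<omega> z))"
    using SR1[OF tpT] unfolding \<omega>_def by auto
  have w_tp: "w tp x = \<omega> x" for x
  proof -
    have tpT2: "tp \<in> {tp..T}" using tp by auto
    have J0: "J tp y = 0" for y unfolding J_def by simp
    have "ereal (w tp x) = fenchel (\<lambda>y. \<omega>s y + ereal (J tp y)) x" using SR2[OF tpT2, of x] by simp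
    also have "\<dots> = fenchel \<omega>s x" by (simp add: J0)
    also have "\<dots> = fenchel (fenchel (fenchel (\<lambda>y. \<sigma>s y + ereal (I tp y)))) x"
      unfolding \<omega>s_def f0 ..
    also have "\<dots> = fenchel (\<lambda>y. \<sigma>s y + ereal (I tp y)) x" by (rule fenchel3)
    also have "\<dots> = ereal (\<omega> x)" unfolding f0 ..
    finally show ?thesis by simp
  qed
  have vw: "v t x \<le> w t x" if t: "t \<in> {tp..T}" for t x
  proof -
    have "\<omega>s y + ereal (J t y) \<le> \<sigma>s y + ereal (I t y)" for y
    proof -
      have "\<omega>s y = fenchel (fenchel (\<lambda>y. \<sigma>s y + ereal (I tp y))) y" unfolding \<omega>s_def f0 ..
      also have "\<dots> \<le> \<sigma>s y + ereal (I tp y)" by (rule fenchel2_le)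
      finally have "\<omega>s y + ereal (J t y) \<le> \<sigma>s y + ereal (I tp y) + ereal (J t y)" by (rule add_right_mono)
      also have "\<dots> = \<sigma>s y + ereal (I t y)" using JI[OF t, of y] by (simp add: add.assoc)
      finally show ?thesis .
    qed
    then have "fenchel (\<lambda>y. \<sigma>s y + ereal (I t y)) x \<le> fenchel (\<lambda>y. \<omega>s y + ereal (J t y)) x"
      by (rule fenchel_mono)
    moreover have "t \<in> {0..T}" using t tp by auto
    ultimately show ?thesis using SR1[of t x] SR2[OF t, of x] by simp
  qed
  have cvx1: "convex_on {0..T} (\<lambda>t. - I t y + B/2 * t\<^sup>2)" if y: "norm y \<le> L" for y
    unfolding I_def
  proof (rule int_convex[OF _ Hcy])
    show "0 \<le> T" using assms(1) by simp
    show "0 \<le> B" using Bpos by simp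
    fix s t assume st: "s \<in> {0..T}" "t \<in> {0..T}" "s \<le> t"
    have "\<bar>H (t, y) - H (s, y)\<bar> \<le> B * \<bar>t - s\<bar>" using HB[OF st(2) st(1) y] by simp
    then show "H (t, y) - H (s, y) \<le> B * (t - s)" using st(3) by simp
  qed
  have cvx2: "convex_on {tp..T} (\<lambda>t. - J t y + B/2 * t\<^sup>2)" if y: "norm y \<le> L" for y
  proof (rule convex_on_shift[where c="I tp y"])
    show "convex_on {tp..T} (\<lambda>t. - I t y + B/2 * t\<^sup>2)"
      by (rule convex_on_subset[OF cvx1[OF y]]) (use tp in \<open>auto simp: convex_real_interval\<close>)
    fix t assume "t \<in> {tp..T}"
    then show "- J t y + B/2 * t\<^sup>2 = - I t y + B/2 * t\<^sup>2 + I tp y" using JI by simp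
  qed
  have cI1: "convex {0..T}" by (simp add: convex_real_interval)
  have cI2: "convex {tp..T}" by (simp add: convex_real_interval)
  have Y1ne: "Y1 \<noteq> {}" using SR1[OF tpT] by blast
  have tpT2: "tp \<in> {tp..T}" using tp by auto
  have Y2ne: "Y2 \<noteq> {}" using SR2[OF tpT2] by blast
  have B0: "0 \<le> B" using Bpos by simp
  have bdd1: "bdd_above ((\<lambda>y. x \<bullet> y - real_of_ereal (\<sigma>s y) - I t y) ` Y1)" if "t \<in> {0..T}" for t x
    using conjunct1[OF conjunct2[OF SR1[OF that, of x]]] .
  have bdd2: "bdd_above ((\<lambda>y. x \<bullet> y - real_of_ereal (\<omega>s y) - J t y) ` Y2)" if "t \<in> {tp..T}" for t x
    using conjunct1[OF conjunct2[OF SR2[OF that, of x]]] .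
  have cv1': "\<And>y. y \<in> Y1 \<Longrightarrow> convex_on {0..T} (\<lambda>t. - I t y + B/2 * t\<^sup>2)"
    using cvx1 unfolding Y1_def by blast
  have cv2': "\<And>y. y \<in> Y2 \<Longrightarrow> convex_on {tp..T} (\<lambda>t. - J t y + B/2 * t\<^sup>2)"
    using cvx2 unfolding Y2_def by blast
  define F where "F = (\<lambda>p::real \<times> 'a. v (fst p) (snd p) + B/2 * (norm p)\<^sup>2)"
  define G where "G = (\<lambda>p::real \<times> 'a. w (fst p) (snd p) + B/2 * (norm p)\<^sup>2)"
  define h where "h = (\<lambda>p::real \<times> 'a. real_of_ereal (u p) + B/2 * (norm p)\<^sup>2)"
  have Fcv: "convex_on ({0..T} \<times> UNIV) F"
    unfolding F_def v_def by (rule sup_convex[OF cI1 Y1ne B0 bdd1 cv1'])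
  have Gcv: "convex_on ({tp..T} \<times> UNIV) G"
    unfolding G_def w_def by (rule sup_convex[OF cI2 Y2ne B0 bdd2 cv2'])
  define \<Omega> where "\<Omega> = {0<..<T} \<times> (UNIV::'a set)"
  have c\<Omega>: "convex \<Omega>" unfolding \<Omega>_def by (intro convex_Times) (simp_all add: convex_real_interval)
  have \<Omega>L: "\<Omega> \<inter> {p. fst p \<le> tp} = {0<..tp} \<times> UNIV" unfolding \<Omega>_def using tp by auto
  have \<Omega>R: "\<Omega> \<inter> {p. tp \<le> fst p} = {tp..<T} \<times> UNIV" unfolding \<Omega>_def using tp by auto
  have hF: "h p = F p" if p: "p \<in> \<Omega>" "fst p \<le> tp" for p
  proof -
    obtain t x where pe: "p = (t, x)" by (cases p)
    have "t \<in> {0..tp}" using p pe unfolding \<Omega>_def by auto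
    then show ?thesis unfolding pe h_def F_def using uL' by simp
  qed
  have hG: "h p = G p" if p: "p \<in> \<Omega>" "tp \<le> fst p" for p
  proof -
    obtain t x where pe: "p = (t, x)" by (cases p)
    have "u (t, x) = ereal (w t x)"
    proof (cases "t = tp")
      case True
      have "u (t, x) = ereal (v tp x)" using uL'[of tp x] True tp by simp
      then show ?thesis using True w_tp[of x] unfolding \<omega>_def by simp
    next
      case False
      then have "t \<in> {tp<..T}" using p pe unfolding \<Omega>_def by auto
      then show ?thesis by (rule uR)
    qed
    then show ?thesis unfolding pe h_def G_def by simp
  qed
  have hL: "convex_on (\<Omega> \<inter> {p. fst p \<le> tp}) h"
  proof (rule convex_on_shift[where c=0])
    show "convex_on (\<Omega> \<inter> {p. fst p \<le> tp}) F" unfolding \<Omega>L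
      by (rule convex_on_subset[OF Fcv]) (use tp in \<open>auto intro!: convex_Times simp: convex_real_interval\<close>)
    fix p assume "p \<in> \<Omega> \<inter> {p. fst p \<le> tp}" then show "h p = F p + 0" using hF by auto
  qed
  have hR: "convex_on (\<Omega> \<inter> {p. tp \<le> fst p}) h"
  proof (rule convex_on_shift[where c=0])
    show "convex_on (\<Omega> \<inter> {p. tp \<le> fst p}) G" unfolding \<Omega>R
      by (rule convex_on_subset[OF Gcv]) (use tp in \<open>auto intro!: convex_Times simp: convex_real_interval\<close>)
    fix p assume "p \<in> \<Omega> \<inter> {p. tp \<le> fst p}" then show "h p = G p + 0" using hG by auto
  qed
  have F\<Omega>: "convex_on \<Omega> F"
    by (rule convex_on_subset[OF Fcv _ c\<Omega>]) (auto simp: \<Omega>_def)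
  have Fh: "F p \<le> h p" if p: "p \<in> \<Omega>" for p
  proof (cases "fst p \<le> tp")
    case True then show ?thesis using hF[OF p] by simp
  next
    case False
    then have "fst p \<in> {tp..T}" using p unfolding \<Omega>_def by auto
    then have "F p \<le> G p" unfolding F_def G_def using vw by simp
    then show ?thesis using hG[OF p] False by simp
  qed
  have Fc: "F p = h p" if "p \<in> \<Omega>" "fst p = tp" for p using hF that by simp
  have hcv: "convex_on \<Omega> h" by (rule glue[OF c\<Omega> hL hR F\<Omega> Fh Fc])
  have fin: "\<bar>u p\<bar> \<noteq> \<infinity>" if p: "p \<in> \<Omega>" for p
  proof -
    obtain t x where pe: "p = (t, x)" by (cases p)
    show ?thesis
    proof (cases "t \<le> tp")
      case True
      then have "t \<in> {0..tp}" using p pe unfolding \<Omega>_def by auto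
      then show ?thesis unfolding pe using uL' by simp
    next
      case False
      then have "t \<in> {tp<..T}" using p pe unfolding \<Omega>_def by auto
      then show ?thesis unfolding pe using uR by simp
    qed
  qed
  have semi: "semiconvex_lin \<Omega> (\<lambda>y. real_of_ereal (u y))"
    unfolding semiconvex_lin_def
  proof (intro exI[of _ B] conjI ballI)
    show "0 < B" by (rule Bpos)
    fix y1 y2 :: "real \<times> 'a" and l :: real assume y: "y1 \<in> \<Omega>" "y2 \<in> \<Omega>" and l: "l \<in> {0..1}"
    define s where "s = l *\<^sub>R y1 + (1-l) *\<^sub>R y2"
    define U0 where "U0 = real_of_ereal (u s)"
    define U1 where "U1 = real_of_ereal (u y1)"
    define U2 where "U2 = real_of_ereal (u y2)"
    define n0 where "n0 = (norm s)\<^sup>2"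
    define n1 where "n1 = (norm y1)\<^sup>2"
    define n2 where "n2 = (norm y2)\<^sup>2"
    define n12 where "n12 = (norm (y1 - y2))\<^sup>2"
    have "h s \<le> l * h y1 + (1-l) * h y2" using hcv y l unfolding convex_on_def s_def by auto
    then have ineq: "U0 + B/2 * n0 \<le> l * (U1 + B/2 * n1) + (1-l) * (U2 + B/2 * n2)"
      unfolding h_def U0_def U1_def U2_def n0_def n1_def n2_def by simp
    have nid: "l * n1 + (1-l) * n2 - n0 = l * (1-l) * n12"
      unfolding n0_def n1_def n2_def n12_def s_def by (rule norm_id)
    have e2: "l * (U1 + B/2 * n1) + (1-l) * (U2 + B/2 * n2) = l * U1 + (1-l) * U2 + B/2 * (l * n1 + (1-l) * n2)"
      by (simp add: field_simps)
    have e3: "B/2 * (l * n1 + (1-l) * n2) = B/2 * n0 + B/2 * (l * n1 + (1-l) * n2 - n0)"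
      by (simp add: field_simps)
    have e4: "B/2 * (l * n1 + (1-l) * n2 - n0) = l * (1-l) * (B/2) * n12"
      unfolding nid by (simp add: field_simps)
    have "U0 + B/2 * n0 \<le> l * U1 + (1-l) * U2 + (B/2 * n0 + l * (1-l) * (B/2) * n12)"
      using ineq by (simp only: e2 e3 e4)
    then have "U0 - l * U1 - (1-l) * U2 \<le> l * (1-l) * (B/2) * n12"
      by (rule lin_aux)
    then show "real_of_ereal (u (l *\<^sub>R y1 + (1 - l) *\<^sub>R y2)) - l * real_of_ereal (u y1)
        - (1 - l) * real_of_ereal (u y2) \<le> l * (1 - l) * (B / 2) * (norm (y1 - y2))\<^sup>2"
      unfolding U0_def U1_def U2_def n12_def s_def .
  qed
  show ?thesis
  proof (intro conjI ballI)
    fix y assume "y \<in> {0<..<T} \<times> (UNIV::'a set)"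
    then have "y \<in> \<Omega>" unfolding \<Omega>_def .
    then show "\<bar>u y\<bar> \<noteq> \<infinity>" by (rule fin)
  next
    show "semiconvex_lin ({0<..<T} \<times> UNIV) (\<lambda>y. real_of_ereal (u y))"
      using semi unfolding \<Omega>_def .
  qed
qed

end
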